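(* The class $\mathcal D$ of continua $X$ that are $d(X)$-Baire is a bloom class: if $X\in\mathcal D$ and $K\subset X$ is a subcontinuum, then the quotient $X/K$ is $d(X/K)$-Baire.
   Context: A continuum is a nondegenerate compact connected Hausdorff space. $d(X)$ is the least cardinality of a dense subset of $X$; $X$ is $\alpha$-Baire if every family of $\alpha$ many open dense subsets has dense intersection. For a subcontinuum $K\subset X$, the $K$-bloom is the canonical quotient map $X\to X/K$ collapsing $K$ to a single point. A class of continua is a bloom class if it is closed under blooms. *)

theory Defs
  imports "HOL-Analysis.Analysis"
begin

definition continuum :: "'a topology \<Rightarrow> bool" where
  "continuum X \<longleftrightarrow> compact_space X \<and> connected_space X \<and> Hausdorff_space X \<and>
     (\<exists>x\<in>topspace X. \<exists>y\<in>topspace X. x \<noteq> y)"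

definition dense_in :: "'a topology \<Rightarrow> 'a set \<Rightarrow> bool" where
  "dense_in X D \<longleftrightarrow> D \<subseteq> topspace X \<and> X closure_of D = topspace X"

text \<open>D is a dense subset of least cardinality, so card_of D represents d(X).\<close>
definition min_dense :: "'a topology \<Rightarrow> 'a set \<Rightarrow> bool" where
  "min_dense X D \<longleftrightarrow> dense_in X D \<and> (\<forall>D'. dense_in X D' \<longrightarrow> (card_of D, card_of D') \<in> ordLeq)"

text \<open>X is alpha-Baire, where the cardinal alpha is given as the cardinality of the set A:
  every family of at most alpha many open dense sets has dense intersection.\<close>
definition alpha_Baire :: "'a topology \<Rightarrow> 'b set \<Rightarrow> bool" where
  "alpha_Baire X A \<longleftrightarrow>
     (\<forall>\<U>. (card_of \<U>, card_of A) \<in> ordLeq \<longrightarrow>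
        (\<forall>U\<in>\<U>. openin X U \<and> dense_in X U) \<longrightarrow>
        dense_in X (topspace X \<inter> \<Inter>\<U>))"

definition density_Baire :: "'a topology \<Rightarrow> bool" where
  "density_Baire X \<longleftrightarrow> (\<exists>D. min_dense X D \<and> alpha_Baire X D)"

text \<open>The K-bloom: quotient X/K, realised on equivalence classes (points {x} for x not in K,
  and the single point K).\<close>
definition bloom_class :: "'a set \<Rightarrow> 'a \<Rightarrow> 'a set" where
  "bloom_class K x = (if x \<in> K then K else {x})"

definition bloom :: "'a topology \<Rightarrow> 'a set \<Rightarrow> 'a set topology" where
  "bloom X K = topology (\<lambda>\<U>. \<U> \<subseteq> bloom_class K ` topspace X \<and> openin X (\<Union>\<U>))"

lemma istopology_bloom:
  "istopology (\<lambda>\<U>. \<U> \<subseteq> bloom_class K ` topspace X \<and> openin X (\<Union>\<U>))"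
  unfolding istopology_def
proof (rule conjI; intro allI impI)
  fix S T :: "'a set set"
  assume S: "S \<subseteq> bloom_class K ` topspace X \<and> openin X (\<Union>S)"
     and T: "T \<subseteq> bloom_class K ` topspace X \<and> openin X (\<Union>T)"
  have disj: "\<And>a b. a \<in> bloom_class K ` topspace X \<Longrightarrow> b \<in> bloom_class K ` topspace X \<Longrightarrow> a \<noteq> b \<Longrightarrow> a \<inter> b = {}"
    by (auto simp: bloom_class_def split: if_splits)
  have "\<Union>(S \<inter> T) = \<Union>S \<inter> \<Union>T"
  proof
    show "\<Union>S \<inter> \<Union>T \<subseteq> \<Union>(S \<inter> T)"
    proof
      fix x assume "x \<in> \<Union>S \<inter> \<Union>T"
      then obtain a b where "a \<in> S" "b \<in> T" "x \<in> a" "x \<in> b" by blast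
      with S T disj have "a = b" by blast
      with \<open>a \<in> S\<close> \<open>b \<in> T\<close> \<open>x \<in> a\<close> show "x \<in> \<Union>(S \<inter> T)" by blast
    qed
  qed blast
  then show "S \<inter> T \<subseteq> bloom_class K ` topspace X \<and> openin X (\<Union>(S \<inter> T))"
    using S T by auto
next
  fix \<K> :: "'a set set set"
  assume "\<forall>S\<in>\<K>. S \<subseteq> bloom_class K ` topspace X \<and> openin X (\<Union>S)"
  then show "\<Union>\<K> \<subseteq> bloom_class K ` topspace X \<and> openin X (\<Union>(\<Union>\<K>))"
  proof -
    have "\<Union>(\<Union>\<K>) = \<Union>((\<lambda>S. \<Union>S) ` \<K>)" by blast
    with \<open>\<forall>S\<in>\<K>. _\<close> show ?thesis
      by (metis (no_types, lifting) Sup_least imageE openin_Union)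
  qed
qed

end

theory Submission
  imports Defs
begin

lemma min_dense_exists:
  shows "\<exists>D. min_dense X D"
proof -
  let ?R = "card_of ` {D. dense_in X D}"
  have "dense_in X (topspace X)" unfolding dense_in_def by simp
  hence "?R \<noteq> {}" by blast
  moreover have "\<forall>r\<in>?R. Well_order r" using card_of_Well_order by blast
  ultimately obtain r where r: "r \<in> ?R" "\<forall>r'\<in>?R. (r, r') \<in> ordLeq"
    by (rule exists_minim_Well_order[THEN bexE])
  then obtain D where D: "dense_in X D" "r = card_of D" by blast
  have "min_dense X D" unfolding min_dense_def
  proof (intro conjI allI impI D(1))
    fix D' assume "dense_in X D'"
    hence "card_of D' \<in> ?R" by blast
    thus "(card_of D, card_of D') \<in> ordLeq" using r(2) D(2) by blast
  qed
  thus ?thesis by blast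
qed

lemma openin_bloom:
  "openin (bloom X K) V \<longleftrightarrow> V \<subseteq> bloom_class K ` topspace X \<and> openin X (\<Union>V)"
  unfolding bloom_def using istopology_bloom[of K X] topology_inverse' by metis

lemma topspace_bloom: assumes "K \<subseteq> topspace X" shows "topspace (bloom X K) = bloom_class K ` topspace X"
proof -
  have "openin (bloom X K) (bloom_class K ` topspace X)"
  proof -
    have "\<Union>(bloom_class K ` topspace X) = topspace X" using assms by (auto simp: bloom_class_def)
    thus ?thesis unfolding openin_bloom by simp
  qed
  hence "bloom_class K ` topspace X \<subseteq> topspace (bloom X K)" by (simp add: openin_subset)
  moreover have "topspace (bloom X K) \<subseteq> bloom_class K ` topspace X"
    using openin_bloom[of X K "topspace (bloom X K)"] by simp
  ultimately show ?thesis by blast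
qed

lemma dense_in_iff: "dense_in X D \<longleftrightarrow> D \<subseteq> topspace X \<and> (\<forall>T. openin X T \<and> T \<noteq> {} \<longrightarrow> D \<inter> T \<noteq> {})"
  unfolding dense_in_def using dense_intersects_open by blast

lemma class_mem:
  assumes "y \<in> bloom_class K z" "y \<notin> K"
  shows "bloom_class K z = {y}" "bloom_class K y = {y}"
  using assms by (auto simp: bloom_class_def split: if_splits)

theorem mainTheorem7:
  fixes X :: "'a topology" and K :: "'a set"
  assumes "continuum X"
    and "density_Baire X"
    and "K \<subseteq> topspace X"
    and "continuum (subtopology X K)"
  shows "density_Baire (bloom X K)"
proof -
  let ?Y = "bloom X K"
  let ?q = "bloom_class K"
  have closedK: "closedin X K"
  proof -
    have "compact_space (subtopology X K)" using assms(4) unfolding continuum_def by blast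
    hence "compactin X K" using assms(3) compactin_subspace by blast
    moreover have "Hausdorff_space X" using assms(1) unfolding continuum_def by blast
    ultimately show ?thesis using compactin_imp_closedin by blast
  qed
  have Kne: "K \<noteq> {}" using assms(4) unfolding continuum_def topspace_subtopology by blast
  have dX: "dense_in X DX" if "min_dense X DX" for DX using that unfolding min_dense_def by (rule conjunct1)
  obtain DX where DX: "min_dense X DX" "alpha_Baire X DX"
    using assms(2) unfolding density_Baire_def by blast
  obtain DY where DY: "min_dense ?Y DY" using min_dense_exists by blast
  have qdense: "dense_in ?Y (?q ` DX)"
    unfolding dense_in_iff
  proof (intro conjI allI impI)
    show "?q ` DX \<subseteq> topspace ?Y"
    proof -
      have "DX \<subseteq> topspace X" using dX[OF DX(1)] unfolding dense_in_def by (rule conjunct1)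
      thus ?thesis unfolding topspace_bloom[OF assms(3)] by (rule image_mono)
    qed
  next
    fix V assume V: "openin ?Y V \<and> V \<noteq> {}"
    hence o: "openin X (\<Union>V)" "V \<subseteq> ?q ` topspace X" using openin_bloom[of X K V] by simp_all
    have "\<Union>V \<noteq> {}"
    proof -
      obtain c where "c \<in> V" using V by blast
      then obtain z where "c = ?q z" using o(2) by blast
      hence "z \<in> c" by (simp add: bloom_class_def)
      thus ?thesis using \<open>c \<in> V\<close> by blast
    qed
    hence "DX \<inter> \<Union>V \<noteq> {}"
      using dX[OF DX(1), unfolded dense_in_iff, THEN conjunct2, rule_format, of "\<Union>V"] o(1) by blast
    then obtain d where d: "d \<in> DX" "d \<in> \<Union>V" by blast
    then obtain c where c: "c \<in> V" "d \<in> c" by blast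
    then obtain z where "c = ?q z" using o(2) by blast
    hence "?q d = c" using c by (auto simp: bloom_class_def split: if_splits)
    thus "?q ` DX \<inter> V \<noteq> {}" using c d by blast
  qed
  have cardY: "(card_of DY, card_of DX) \<in> ordLeq"
  proof -
    have "(card_of DY, card_of (?q ` DX)) \<in> ordLeq" using DY qdense unfolding min_dense_def by blast
    thus ?thesis using card_of_image[of ?q DX] by (rule ordLeq_transitive)
  qed
  have "alpha_Baire ?Y DY"
    unfolding alpha_Baire_def
  proof (intro allI impI)
    fix \<U> :: "'a set set set"
    assume cU: "(card_of \<U>, card_of DY) \<in> ordLeq" and U: "\<forall>U\<in>\<U>. openin ?Y U \<and> dense_in ?Y U"
    show "dense_in ?Y (topspace ?Y \<inter> \<Inter>\<U>)"
      unfolding dense_in_iff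
    proof (intro conjI allI impI)
      show "topspace ?Y \<inter> \<Inter>\<U> \<subseteq> topspace ?Y" by blast
    next
      fix V assume V: "openin ?Y V \<and> V \<noteq> {}"
      hence o: "openin X (\<Union>V)" "V \<subseteq> ?q ` topspace X" using openin_bloom[of X K V] by simp_all
      show "(topspace ?Y \<inter> \<Inter>\<U>) \<inter> V \<noteq> {}"
      proof (cases "V \<subseteq> {K}")
        case True
        hence VK: "V = {K}" using V by blast
        have "K \<in> topspace ?Y" using Kne assms(3) unfolding topspace_bloom[OF assms(3)]
          by (auto simp: bloom_class_def)
        moreover have "K \<in> U" if "U \<in> \<U>" for U
        proof -
          have "dense_in ?Y U" using U that by blast
          hence "U \<inter> V \<noteq> {}" using V unfolding dense_in_iff by blast
          thus ?thesis using VK by blast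
        qed
        ultimately show ?thesis using VK by blast
      next
        case False
        then obtain c where c: "c \<in> V" "c \<noteq> K" by blast
        then obtain x where x: "x \<in> topspace X" "c = ?q x" using o(2) by blast
        have xK: "x \<notin> K" using x c by (auto simp: bloom_class_def)
        have xc: "x \<in> c" using x xK by (simp add: bloom_class_def)
        define W where "W = \<Union>V - K"
        have oW: "openin X W" unfolding W_def using o(1) closedK by (simp add: openin_diff)
        have Wne: "W \<noteq> {}" using xc xK c unfolding W_def by blast
        define f where "f = (\<lambda>U. \<Union>U \<union> X interior_of K)"
        have fopen: "openin X (f U) \<and> dense_in X (f U)" if "U \<in> \<U>" for U
        proof
          have oU: "openin X (\<Union>U)" using U that openin_bloom[of X K U] by simp
          thus "openin X (f U)" unfolding f_def by (simp add: openin_Un)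
          have sub: "f U \<subseteq> topspace X" using oU openin_subset
            by (metis f_def interior_of_subset_topspace le_sup_iff)
          show "dense_in X (f U)"
            unfolding dense_in_iff
          proof (intro conjI allI impI sub)
            fix T assume T: "openin X T \<and> T \<noteq> {}"
            show "f U \<inter> T \<noteq> {}"
            proof (cases "T \<subseteq> K")
              case True
              hence "T \<subseteq> X interior_of K" using T by (simp add: interior_of_maximal)
              thus ?thesis using T unfolding f_def by blast
            next
              case False
              then obtain y where y: "y \<in> T" "y \<notin> K" by blast
              have oT: "openin X (T - K)" using T closedK by (simp add: openin_diff)
              have "openin ?Y (?q ` (T - K))"
                unfolding openin_bloom
              proof
                show "?q ` (T - K) \<subseteq> ?q ` topspace X" using openin_subset[OF oT] by blast
                have "\<Union>(?q ` (T - K)) = T - K" by (auto simp: bloom_class_def)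
                thus "openin X (\<Union>(?q ` (T - K)))" using oT by simp
              qed
              moreover have "?q ` (T - K) \<noteq> {}" using y by blast
              moreover have "dense_in ?Y U" using U that by blast
              ultimately obtain c where "c \<in> U" "c \<in> ?q ` (T - K)"
                unfolding dense_in_iff by blast
              then obtain z where "z \<in> T" "z \<notin> K" "?q z \<in> U" by blast
              hence "z \<in> \<Union>U" by (auto simp: bloom_class_def)
              thus ?thesis using \<open>z \<in> T\<close> unfolding f_def by blast
            qed
          qed
        qed
        have "(card_of (f ` \<U>), card_of DX) \<in> ordLeq"
          using ordLeq_transitive[OF ordLeq_transitive[OF card_of_image[of f \<U>] cU] cardY] .
        hence "dense_in X (topspace X \<inter> \<Inter>(f ` \<U>))"
        proof -
          have "\<forall>U\<in>f ` \<U>. openin X U \<and> dense_in X U" using fopen by blast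
          moreover have "\<forall>\<V>. (card_of \<V>, card_of DX) \<in> ordLeq \<longrightarrow> (\<forall>U\<in>\<V>. openin X U \<and> dense_in X U) \<longrightarrow> dense_in X (topspace X \<inter> \<Inter>\<V>)"
            using DX(2) by (simp only: alpha_Baire_def)
          ultimately show ?thesis using \<open>(card_of (f ` \<U>), card_of DX) \<in> ordLeq\<close> by (simp only:)
        qed
        hence "(topspace X \<inter> \<Inter>(f ` \<U>)) \<inter> W \<noteq> {}"
          using oW Wne unfolding dense_in_iff by (metis (no_types, lifting))
        then obtain y where y: "y \<in> W" "y \<in> topspace X" "\<forall>U\<in>\<U>. y \<in> f U"
          by blast
        have yK: "y \<notin> K" using y(1) unfolding W_def by blast
        have "y \<notin> X interior_of K" using yK interior_of_subset[of X K] by (meson subsetD)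
        hence yU: "y \<in> \<Union>U" if "U \<in> \<U>" for U
        proof -
          have "y \<in> f U" using y(3) that by (rule bspec)
          thus ?thesis using \<open>y \<notin> X interior_of K\<close> unfolding f_def by (simp only: Un_iff) simp
        qed
        have inU: "{y} \<in> U" if hU: "U \<in> \<U>" for U
        proof -
          obtain c where c: "c \<in> U" "y \<in> c" using yU[OF hU] by blast
          have "U \<subseteq> ?q ` topspace X" using U hU openin_bloom[of X K U] by simp
          then obtain z where "c = ?q z" using c by blast
          hence "c = {y}" using class_mem(1)[of y K z] c yK by simp
          thus ?thesis using c by simp
        qed
        have "{y} \<in> V"
        proof -
          obtain c where c: "c \<in> V" "y \<in> c" using y(1) unfolding W_def by blast
          then obtain z where "c = ?q z" using o(2) by blast
          hence "c = {y}" using class_mem(1)[of y K z] c yK by simp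
          thus ?thesis using c by simp
        qed
        moreover have "{y} \<in> topspace ?Y" using y(2) yK unfolding topspace_bloom[OF assms(3)]
          by (metis bloom_class_def image_eqI)
        ultimately show ?thesis using inU by blast
      qed
    qed
  qed
  thus ?thesis unfolding density_Baire_def using DY by blast
qed

end
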